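(* Let $i\ge0$, $l\ge1$, $j\ge0$, $j_1,\ldots,j_l\ge0$ and $k\ge0$ be integers. Then (a) $\displaystyle b_{i,j_1+\cdots+j_l,k}=\sum\binom{i}{i_1,\ldots,i_{l+k}}\prod_{r=1}^{l}b_{i_r,j_r,0}$, the sum being over all integers $i_1,\ldots,i_{l+k}\ge0$ with $i_1+\cdots+i_{l+k}=i$; (b) $\displaystyle b_{i,j,k}=\sum\binom{i}{i_1,\ldots,i_{j+k}}$, the sum being over all integers $i_1,\ldots,i_{j+k}\ge0$ with $i_1+\cdots+i_{j+k}=i$ and $i_1>0,\ldots,i_j>0$.
   Context: For integers $i\ge0$, $j\ge0$ and real $k$, $b_{i,j,k}=\sum_{r=0}^{j}\binom{j}{r}(-1)^{j-r}(r+k)^i$, with the convention $0^0=1$. $\binom{i}{i_1,\ldots,i_n}=\frac{i!}{i_1!\cdots i_n!}$ is the multinomial coefficient. *)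

theory Defs
  imports Complex_Main
begin

text \<open>b_{i,j,k} = sum_{r=0}^{j} (j choose r) (-1)^(j-r) (r+k)^i, with 0^0 = 1
  (Isabelle's power with natural exponent satisfies 0^0 = 1).\<close>
definition bcoef :: "nat \<Rightarrow> nat \<Rightarrow> real \<Rightarrow> real" where
  "bcoef i j k = (\<Sum>r = 0..j. real (j choose r) * (-1) ^ (j - r) * (real r + k) ^ i)"

definition multinomial :: "nat \<Rightarrow> nat list \<Rightarrow> real" where
  "multinomial i xs = fact i / (\<Prod>x\<leftarrow>xs. fact x)"

definition compositions :: "nat \<Rightarrow> nat \<Rightarrow> nat list set" where
  "compositions n i = {xs. length xs = n \<and> sum_list xs = i}"

end

theory Submission
  imports Defs
begin

lemma b_zero: "bcoef i 0 k = k ^ i"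
  by (simp add: bcoef_def)

lemma b_rec: "bcoef i (Suc j) k = bcoef i j (k + 1) - bcoef i j k"
proof -
  define h where "h r = real (j choose r) * (-1) ^ (Suc j - r) * (real r + k) ^ i" for r
  have bj: "bcoef i j k = - (\<Sum>r\<le>j. h r)"
    by (simp add: bcoef_def h_def atLeast0AtMost sum_negf[symmetric] Suc_diff_le)
  have "(\<Sum>r\<le>Suc j. h r) = (\<Sum>r\<le>j. h r)" by (simp add: h_def)
  hence hs: "h 0 + (\<Sum>r\<le>j. h (Suc r)) = (\<Sum>r\<le>j. h r)"
    by (metis sum.atMost_Suc_shift)
  have "bcoef i (Suc j) k = (\<Sum>r\<le>Suc j. real (Suc j choose r) * (-1) ^ (Suc j - r) * (real r + k) ^ i)"
    by (simp add: bcoef_def atLeast0AtMost)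
  also have "\<dots> = h 0 + (\<Sum>r\<le>j. real (j choose r) * (-1) ^ (j - r) * (real r + (k+1)) ^ i + h (Suc r))"
    by (subst sum.atMost_Suc_shift) (simp add: h_def algebra_simps)
  also have "\<dots> = bcoef i j (k + 1) + (h 0 + (\<Sum>r\<le>j. h (Suc r)))"
    by (simp add: sum.distrib bcoef_def atLeast0AtMost)
  also have "\<dots> = bcoef i j (k + 1) - bcoef i j k" using hs bj by simp
  finally show ?thesis .
qed

lemma conv: "(\<Sum>x\<le>i. real (i choose x) * bcoef x j1 k1 * bcoef (i-x) j2 k2) = bcoef i (j1+j2) (k1+k2)"
proof (induction j2 arbitrary: k2)
  case 0
  have "(\<Sum>x\<le>i. real (i choose x) * bcoef x j1 k1 * bcoef (i-x) 0 k2)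
     = (\<Sum>x\<le>i. \<Sum>r=0..j1. real (j1 choose r) * (-1) ^ (j1 - r) * (real (i choose x) * (real r + k1) ^ x * k2 ^ (i - x)))"
    by (simp add: b_zero bcoef_def sum_distrib_left sum_distrib_right algebra_simps)
  also have "\<dots> = (\<Sum>r=0..j1. real (j1 choose r) * (-1) ^ (j1 - r) * (\<Sum>x\<le>i. real (i choose x) * (real r + k1) ^ x * k2 ^ (i - x)))"
    by (subst sum.swap) (simp add: sum_distrib_left)
  also have "\<dots> = bcoef i j1 (k1 + k2)"
    by (simp add: bcoef_def binomial_ring[symmetric] add.assoc)
  finally show ?case by simp
next
  case (Suc j2)
  show ?case
    by (simp add: b_rec Suc.IH[symmetric] right_diff_distrib sum_subtractf add.assoc)
qed

lemma comp_finite: "finite (compositions n i)"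
proof -
  have "compositions n i \<subseteq> {xs. set xs \<subseteq> {..i} \<and> length xs = n}"
    by (auto simp: compositions_def member_le_sum_list)
  thus ?thesis by (rule finite_subset) (rule finite_lists_length_eq, simp)
qed

lemma comp_0: "compositions 0 i = (if i = 0 then {[]} else {})"
  by (auto simp: compositions_def)

lemma comp_Suc_eq: "compositions (Suc n) i = (\<lambda>(x,ys). x # ys) ` (SIGMA x:{..i}. compositions n (i - x))"
proof (rule set_eqI)
  fix xs
  show "xs \<in> compositions (Suc n) i \<longleftrightarrow> xs \<in> (\<lambda>(x,ys). x # ys) ` (SIGMA x:{..i}. compositions n (i - x))"
  proof
    assume "xs \<in> compositions (Suc n) i"
    then obtain x ys where "xs = x # ys" "length ys = n" "x + sum_list ys = i"
      by (cases xs) (auto simp: compositions_def)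
    thus "xs \<in> (\<lambda>(x,ys). x # ys) ` (SIGMA x:{..i}. compositions n (i - x))"
      by (auto simp: compositions_def image_iff intro!: bexI[of _ "(x,ys)"])
  qed (auto simp: compositions_def)
qed

lemma comp_sum_Suc: "(\<Sum>xs\<in>compositions (Suc n) i. g xs) = (\<Sum>x\<le>i. \<Sum>ys\<in>compositions n (i-x). g (x#ys))"
proof -
  have inj: "inj_on (\<lambda>(x,ys). x # ys) (SIGMA x:{..i}. compositions n (i - x))"
    by (auto simp: inj_on_def)
  show ?thesis
    unfolding comp_Suc_eq sum.reindex[OF inj]
    by (simp add: sum.Sigma comp_finite split_def)
qed

lemma multi_cons: "x \<le> i \<Longrightarrow> multinomial i (x # ys) = real (i choose x) * multinomial (i - x) ys"
  by (simp add: multinomial_def binomial_fact)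

lemma main_gen:
  "(\<Sum>xs\<in>compositions n i. multinomial i xs * (\<Prod>m<n. bcoef (xs!m) (J m) (K m)))
     = bcoef i (\<Sum>m<n. J m) (\<Sum>m<n. K m)"
proof (induction n arbitrary: i J K)
  case 0
  show ?case by (simp add: comp_0 b_zero multinomial_def)
next
  case (Suc n)
  have "(\<Sum>xs\<in>compositions (Suc n) i. multinomial i xs * (\<Prod>m<Suc n. bcoef (xs!m) (J m) (K m)))
     = (\<Sum>x\<le>i. \<Sum>ys\<in>compositions n (i-x). real (i choose x) * bcoef x (J 0) (K 0) *
          (multinomial (i-x) ys * (\<Prod>m<n. bcoef (ys!m) (J (Suc m)) (K (Suc m)))))"
    unfolding comp_sum_Suc
    by (intro sum.cong refl, simp_all only: prod.lessThan_Suc_shift, simp_all add: multi_cons)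
  also have "\<dots> = (\<Sum>x\<le>i. real (i choose x) * bcoef x (J 0) (K 0) *
          bcoef (i-x) (\<Sum>m<n. J (Suc m)) (\<Sum>m<n. K (Suc m)))"
    by (simp add: sum_distrib_left[symmetric] Suc.IH)
  also have "\<dots> = bcoef i (\<Sum>m<Suc n. J m) (\<Sum>m<Suc n. K m)"
    by (simp only: conv sum.lessThan_Suc_shift)
  finally show ?case .
qed

lemma sum_split_if: fixes l k :: nat shows "(\<Sum>m<l+k. if m<l then f m else g m) = (\<Sum>m<l. f m) + (\<Sum>m<k. g (l+m))"
  by (induction k) (auto simp: add.assoc mult.assoc)

lemma prod_split_if: fixes l k :: nat shows "(\<Prod>m<l+k. if m<l then f m else g m) = (\<Prod>m<l. f m) * (\<Prod>m<k. g (l+m))"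
  by (induction k) (auto simp: add.assoc mult.assoc)

lemma b10: "bcoef x (Suc 0) 0 = (if x > 0 then 1 else 0)"
  by (simp add: bcoef_def)

lemma prod_ind: fixes j :: nat shows "(\<Prod>m<j. if 0 < f m then 1 else (0::real)) = (if \<forall>r<j. 0 < f r then 1 else 0)"
  by (induction j) (auto simp: less_Suc_eq)

theorem mainTheorem19:
  fixes i l j k :: nat and js :: "nat list"
  assumes "l \<ge> 1" and "length js = l"
  shows "(bcoef i (sum_list js) (real k) =
           (\<Sum>xs\<in>compositions (l + k) i.
              multinomial i xs * (\<Prod>r<l. bcoef (xs ! r) (js ! r) 0))) \<and>
         (bcoef i j (real k) =
           (\<Sum>xs\<in>{xs \<in> compositions (j + k) i. \<forall>r<j. xs ! r > 0}. multinomial i xs))"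
proof
  define J where "J m = (if m < l then js ! m else 0)" for m
  define K where "K m = (if m < l then 0 else (1::real))" for m
  have sJ: "(\<Sum>m<l+k. J m) = sum_list js"
    using sum_split_if[where l=l and k=k and f="\<lambda>m. js ! m" and g="\<lambda>_. 0"] assms(2)
    by (simp add: J_def sum_list_sum_nth atLeast0LessThan)
  have sK: "(\<Sum>m<l+k. K m) = real k"
    using sum_split_if[where l=l and k=k and f="\<lambda>m. 0" and g="\<lambda>_. 1::real"] by (simp add: K_def)
  have pr: "(\<Prod>m<l+k. bcoef (xs!m) (J m) (K m)) = (\<Prod>r<l. bcoef (xs ! r) (js ! r) 0)" for xs
    using prod_split_if[where l=l and k=k and f="\<lambda>m. bcoef (xs!m) (js ! m) 0" and g="\<lambda>m. bcoef (xs!m) 0 1"]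
    by (simp add: J_def K_def b_zero if_distrib cong: if_cong)
  show "bcoef i (sum_list js) (real k) =
           (\<Sum>xs\<in>compositions (l + k) i.
              multinomial i xs * (\<Prod>r<l. bcoef (xs ! r) (js ! r) 0))"
    using main_gen[where n="l+k" and i=i and J=J and K=K] by (simp add: sJ sK pr)
next
  define J where "J m = (if m < j then 1 else (0::nat))" for m
  define K where "K m = (if m < j then 0 else (1::real))" for m
  have sJ: "(\<Sum>m<j+k. J m) = j"
    using sum_split_if[where l=j and k=k and f="\<lambda>m. 1::nat" and g="\<lambda>_. 0"] by (simp add: J_def)
  have sK: "(\<Sum>m<j+k. K m) = real k"
    using sum_split_if[where l=j and k=k and f="\<lambda>m. 0" and g="\<lambda>_. 1::real"] by (simp add: K_def)
  have pr: "(\<Prod>m<j+k. bcoef (xs!m) (J m) (K m)) = (if \<forall>r<j. xs ! r > 0 then 1 else 0)" for xs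
    using prod_split_if[where l=j and k=k and f="\<lambda>m. bcoef (xs!m) 1 0" and g="\<lambda>m. bcoef (xs!m) 0 1"]
    by (simp add: J_def K_def b_zero b10 prod_ind if_distrib cong: if_cong)
  have "bcoef i j (real k) = (\<Sum>xs\<in>compositions (j + k) i. multinomial i xs * (if \<forall>r<j. xs ! r > 0 then 1 else 0))"
    using main_gen[where n="j+k" and i=i and J=J and K=K] by (simp add: sJ sK pr)
  also have "\<dots> = (\<Sum>xs\<in>{xs \<in> compositions (j + k) i. \<forall>r<j. xs ! r > 0}. multinomial i xs)"
    by (simp add: sum.inter_filter comp_finite if_distrib cong: if_cong)
  finally show "bcoef i j (real k) =
           (\<Sum>xs\<in>{xs \<in> compositions (j + k) i. \<forall>r<j. xs ! r > 0}. multinomial i xs)" .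
qed

end
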